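(* Let $n\ge4$ be even, $p\ge n+1$ an integer, $c_1$ a positive integer, $a_k=pc_k$, $c_{k+1}=p^2c_k$, and let $T$, $I^{(j)}$, $I^{(j)}_i$ and $\lambda_k$ be as in the context. Then for every odd $k$ with $3\le k\le n-1$ and every $j\ge1$: (1) $\dfrac{\lambda_k(I^{(j)}_k)}{\lambda_k(I^{(j)})}>\dfrac12$; (2) $\dfrac{\lambda_k\bigl(\bigcup_{2\le i\le n-1,\ i\ne k}I^{(j)}_i\bigr)}{\lambda_k(I^{(j)})}<\dfrac{n}{2c_j}$.
   Context: $\pi$ is the permutation of $\{1,\dots,n\}$ with top row $1,2,\dots,n$ and bottom row $n,3,2,5,4,\dots,n-1,n-2,1$. Right Rauzy induction: step "0" when the rightmost domain (top) interval is longer, "1" when the rightmost image (bottom) interval is longer. For $a,c>0$, $\dot\gamma_{m,a}=1^{n-1-m}0^a10^2$, $\gamma_{a,c}=0\,\dot\gamma_{n-2,a}\cdots\dot\gamma_{2,a}\,1^{c(n-1)}$; its transition matrix $\Theta_{a,c}$ (old lengths $=\Theta_{a,c}\cdot$new lengths) has row $1=(1,c,\dots,c)$, row $n=(1,c+1,\dots,c+1)$, and for $1\le i\le(n-2)/2$: row $2i$ has $0$ in column 1, $2$ in columns $2i,2i+1$, $1$ in the other columns among $2,\dots,n$; row $2i+1$ has $a$ in column $2i$, $a+1$ in column $2i+1$, $0$ elsewhere. $\Theta_k=\Theta_{a_k,c_k}$. $T$ is an IET of $[0,1)$ with permutation $\pi$ whose right Rauzy induction path is $\gamma_{a_1,c_1}\gamma_{a_2,c_2}\cdots$;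 $I^{(j)}$ is the interval on which the induced map lives after the first $j$ blocks and $I^{(j)}_1,\dots,I^{(j)}_n$ its exchanged subintervals; lengths satisfy $\ell^{(j-1)}=\Theta_j\ell^{(j)}$. For $v\ge0$, $|v|$ is the sum of entries and $\overline v=v/|v|$. $\lambda_k$ denotes the $T$-invariant Borel probability measure such that for every $j\ge0$, $(\lambda_k(I^{(j)}_i))_i$ is a positive multiple of $\lim_{m\to\infty}\overline{\Theta_{j+1}\cdots\Theta_me_k}$. *)

theory Defs
  imports "HOL-Analysis.Analysis" "HOL-Probability.Probability"
begin

(* Labelled interval exchange data: (top row, bottom row, lengths indexed by label). *)
type_synonym iet = "nat list \<times> nat list \<times> (nat \<Rightarrow> real)"

definition insert_after :: "nat \<Rightarrow> nat \<Rightarrow> nat list \<Rightarrow> nat list" where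
  "insert_after x y xs = takeWhile (\<lambda>z. z \<noteq> x) xs @ take 1 (dropWhile (\<lambda>z. z \<noteq> x) xs)
      @ [y] @ drop 1 (dropWhile (\<lambda>z. z \<noteq> x) xs)"

(* One step of labelled right Rauzy induction, required to be of type e
   (0: rightmost top interval strictly longer, 1: rightmost bottom interval strictly longer). *)
definition rauzy_step :: "nat \<Rightarrow> iet \<Rightarrow> iet option" where
  "rauzy_step e s = (case s of (t, b, l) \<Rightarrow>
     let \<alpha> = last t; \<beta> = last b in
     if e = 0 then
       (if l \<alpha> > l \<beta> then Some (t, insert_after \<alpha> \<beta> (butlast b), l(\<alpha> := l \<alpha> - l \<beta>)) else None)
     else if e = 1 then
       (if l \<beta> > l \<alpha> then Some (insert_after \<beta> \<alpha> (butlast t), b, l(\<beta> := l \<beta> - l \<alpha>)) else None)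
     else None)"

fun rauzy_run :: "iet \<Rightarrow> nat list \<Rightarrow> iet option" where
  "rauzy_run s [] = Some s"
| "rauzy_run s (e # w) = (case rauzy_step e s of None \<Rightarrow> None | Some s' \<Rightarrow> rauzy_run s' w)"

definition pi_top :: "nat \<Rightarrow> nat list" where
  "pi_top n = [1..<n+1]"
definition pi_bot :: "nat \<Rightarrow> nat list" where
  "pi_bot n = [n] @ concat (map (\<lambda>i. [2*i+1, 2*i]) [1..<(n-2) div 2 + 1]) @ [1]"

definition gamma_dot :: "nat \<Rightarrow> nat \<Rightarrow> nat \<Rightarrow> nat list" where
  "gamma_dot n m a = replicate (n - 1 - m) 1 @ replicate a 0 @ [1] @ [0, 0]"

definition gamma_word :: "nat \<Rightarrow> nat \<Rightarrow> nat \<Rightarrow> nat list" where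
  "gamma_word n a c = [0] @ concat (map (\<lambda>i. gamma_dot n (n - 2*i) a) [1..<(n-2) div 2 + 1])
                        @ replicate (c * (n - 1)) 1"

definition Theta :: "nat \<Rightarrow> nat \<Rightarrow> nat \<Rightarrow> nat \<Rightarrow> nat \<Rightarrow> real" where
  "Theta n a c i j =
    (if i \<in> {1..n} \<and> j \<in> {1..n} then
      (if i = 1 then (if j = 1 then 1 else real c)
       else if i = n then (if j = 1 then 1 else real c + 1)
       else if even i then (if j = 1 then 0 else if j = i \<or> j = i + 1 then 2 else 1)
       else (if j + 1 = i then real a else if j = i then real a + 1 else 0))
     else 0)"

definition mat_vec :: "nat \<Rightarrow> (nat \<Rightarrow> nat \<Rightarrow> real) \<Rightarrow> (nat \<Rightarrow> real) \<Rightarrow> nat \<Rightarrow> real" where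
  "mat_vec n M v = (\<lambda>i. \<Sum>j\<in>{1..n}. M i j * v j)"

definition unit_vec :: "nat \<Rightarrow> nat \<Rightarrow> real" where
  "unit_vec k = (\<lambda>i. if i = k then 1 else 0)"

definition vnorm1 :: "nat \<Rightarrow> (nat \<Rightarrow> real) \<Rightarrow> real" where
  "vnorm1 n v = (\<Sum>i\<in>{1..n}. v i)"
definition vnormalize :: "nat \<Rightarrow> (nat \<Rightarrow> real) \<Rightarrow> nat \<Rightarrow> real" where
  "vnormalize n v = (\<lambda>i. v i / vnorm1 n v)"

definition mat_prod_apply :: "nat \<Rightarrow> (nat \<Rightarrow> nat \<Rightarrow> nat \<Rightarrow> real) \<Rightarrow> nat \<Rightarrow> nat \<Rightarrow> (nat \<Rightarrow> real) \<Rightarrow> nat \<Rightarrow> real" where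
  "mat_prod_apply n Th j m v = foldr (\<lambda>i w. mat_vec n (Th i) w) [Suc j..<Suc m] v"

(* geometry of an IET datum: domain intervals are laid out in top order starting at 0,
   image intervals in bottom order *)
definition start_in :: "nat list \<Rightarrow> (nat \<Rightarrow> real) \<Rightarrow> nat \<Rightarrow> real" where
  "start_in xs l i = sum_list (map l (takeWhile (\<lambda>x. x \<noteq> i) xs))"

definition sub_interval :: "iet \<Rightarrow> nat \<Rightarrow> real set" where
  "sub_interval s i = (case s of (t, b, l) \<Rightarrow> {start_in t l i ..< start_in t l i + l i})"

definition whole_interval :: "iet \<Rightarrow> real set" where
  "whole_interval s = (case s of (t, b, l) \<Rightarrow> {0 ..< sum_list (map l t)})"

(* the IET map (identity outside its domain) *)
definition iet_map :: "iet \<Rightarrow> real \<Rightarrow> real" where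
  "iet_map s x = (case s of (t, b, l) \<Rightarrow>
     x + (\<Sum>i\<in>set t. if x \<in> sub_interval s i then start_in b l i - start_in t l i else 0))"

fun block_state :: "iet \<Rightarrow> (nat \<Rightarrow> nat list) \<Rightarrow> nat \<Rightarrow> iet" where
  "block_state s0 G 0 = s0"
| "block_state s0 G (Suc j) = the (rauzy_run (block_state s0 G j) (G (Suc j)))"

(* the right Rauzy induction path of s0 is G 1 G 2 G 3 ... *)
definition follows_path :: "iet \<Rightarrow> (nat \<Rightarrow> nat list) \<Rightarrow> bool" where
  "follows_path s0 G = (\<forall>j. rauzy_run (block_state s0 G j) (G (Suc j)) \<noteq> None)"

end

theory Submission
  imports Defs
begin


lemma insert_after_decomp:
  "\<exists>A B C. insert_after x y xs = A @ B @ [y] @ C \<and> xs = A @ B @ C"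
proof -
  let ?d = "dropWhile (\<lambda>z. z \<noteq> x) xs"
  have "xs = takeWhile (\<lambda>z. z \<noteq> x) xs @ take 1 ?d @ drop 1 ?d" by simp
  then show ?thesis unfolding insert_after_def by blast
qed

lemma insert_after_set: "set (insert_after x y xs) = insert y (set xs)"
  using insert_after_decomp[of x y xs] by auto

lemma insert_after_distinct: "distinct xs \<Longrightarrow> y \<notin> set xs \<Longrightarrow> distinct (insert_after x y xs)"
  using insert_after_decomp[of x y xs] by auto

definition good :: "nat \<Rightarrow> iet \<Rightarrow> bool" where
  "good n s = (case s of (t, b, l) \<Rightarrow> distinct t \<and> set t = {1..n} \<and> set b = {1..n} \<and> (\<forall>i\<in>{1..n}. l i > 0))"

lemma set_butlast_mem: "a \<in> set xs \<Longrightarrow> a \<noteq> last xs \<Longrightarrow> a \<in> set (butlast xs)"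
  by (metis append_butlast_last_id butlast.simps(1) in_set_butlast_appendI rotate1.simps(2) set_rotate1 empty_iff list.set(1) rotate1_rotate_swap set_ConsD)

lemma set_butlast_insert: "xs \<noteq> [] \<Longrightarrow> insert (last xs) (set (butlast xs)) = set xs"
  by (metis append_butlast_last_id insert_is_Un set_append set_simps(2) empty_set Un_commute Un_insert_right sup_bot.right_neutral)

lemma step_good:
  assumes "n \<ge> 1" "good n s" "rauzy_step e s = Some s'"
  shows "good n s'"
proof -
  obtain t b l where s: "s = (t, b, l)" by (cases s) auto
  have g: "distinct t" "set t = {1..n}" "set b = {1..n}" "\<forall>i\<in>{1..n}. l i > 0"
    using assms(2) by (auto simp: good_def s)
  have tn: "t \<noteq> []" "b \<noteq> []" using g assms(1) by auto
  have la: "last t \<in> {1..n}" "last b \<in> {1..n}" using tn g(2,3) last_in_set by blast+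
  show ?thesis
  proof (cases "e = 0")
    case True
    then have lt: "l (last t) > l (last b)" and s': "s' = (t, insert_after (last t) (last b) (butlast b), l(last t := l (last t) - l (last b)))"
      using assms(3) by (auto simp: rauzy_step_def s Let_def split: if_splits)
    have "set (insert_after (last t) (last b) (butlast b)) = {1..n}"
      using set_butlast_insert[OF tn(2)] g(3) by (simp add: insert_after_set)
    then show ?thesis using g lt by (auto simp: good_def s')
  next
    case False
    then have e1: "e = 1" using assms(3) by (auto simp: rauzy_step_def s Let_def split: if_splits)
    then have lt: "l (last b) > l (last t)" and s': "s' = (insert_after (last b) (last t) (butlast t), b, l(last b := l (last b) - l (last t)))"
      using assms(3) by (auto simp: rauzy_step_def s Let_def split: if_splits)
    have "set (insert_after (last b) (last t) (butlast t)) = {1..n}"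
      using set_butlast_insert[OF tn(1)] g(2) by (simp add: insert_after_set)
    moreover have "distinct (insert_after (last b) (last t) (butlast t))"
      apply (rule insert_after_distinct)
      using g(1) distinct_butlast apply blast
      using g(1) tn(1) by (metis append_butlast_last_id distinct_append not_distinct_conv_prefix distinct1_rotate rotate1.simps(2) distinct.simps(2))
    ultimately show ?thesis using g lt by (auto simp: good_def s')
  qed
qed

lemma run_good: "n \<ge> 1 \<Longrightarrow> good n s \<Longrightarrow> rauzy_run s w = Some s' \<Longrightarrow> good n s'"
proof (induction w arbitrary: s)
  case Nil then show ?case by simp
next
  case (Cons e w)
  then obtain s1 where "rauzy_step e s = Some s1" "rauzy_run s1 w = Some s'"
    by (auto split: option.splits)
  then show ?case using Cons step_good by blast
qed

lemma block_good:
  assumes "n \<ge> 1" "follows_path s0 G" "good n s0"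
  shows "good n (block_state s0 G j)"
proof (induction j)
  case 0 then show ?case using assms by simp
next
  case (Suc j)
  from assms(2) obtain s' where "rauzy_run (block_state s0 G j) (G (Suc j)) = Some s'"
    unfolding follows_path_def by blast
  then show ?case using run_good[OF assms(1) Suc] by simp
qed

lemma set_concat_pairs: "set (concat (map (\<lambda>i. [2*i+1, 2*i]) [1..<m+1])) = {2..2*m+1}"
proof (induction m)
  case 0 then show ?case by simp
next
  case (Suc m)
  have "[1..<Suc m + 1] = [1..<m+1] @ [Suc m]" by simp
  then show ?case using Suc by auto
qed

lemma init_good:
  assumes "even n" "n \<ge> 4" "\<forall>i\<in>{1..n}. l0 i > 0"
  shows "good n (pi_top n, pi_bot n, l0)"
proof -
  have "2 * ((n-2) div 2) + 1 = n - 1" using assms by auto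
  then have "set (pi_bot n) = {n} \<union> {2..n-1} \<union> {1}"
    unfolding pi_bot_def using set_concat_pairs[of "(n-2) div 2"] by auto
  also have "\<dots> = {1..n}" using assms by auto
  finally show ?thesis using assms by (auto simp: good_def pi_top_def)
qed

lemma start_in_Cons: "start_in (x#xs) l i = (if x = i then 0 else l x + start_in xs l i)"
  by (simp add: start_in_def)

lemma cover:
  "distinct t \<Longrightarrow> \<forall>i\<in>set t. 0 \<le> l i \<Longrightarrow>
   {0..<sum_list (map l t)} \<subseteq> (\<Union>i\<in>set t. {start_in t l i..<start_in t l i + l i})"
proof (induction t)
  case Nil then show ?case by simp
next
  case (Cons x xs)
  show ?case
  proof
    fix y assume y: "y \<in> {0..<sum_list (map l (x#xs))}"
    show "y \<in> (\<Union>i\<in>set (x#xs). {start_in (x#xs) l i..<start_in (x#xs) l i + l i})"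
    proof (cases "y < l x")
      case True then show ?thesis using y by (auto simp: start_in_Cons intro!: bexI[of _ x])
    next
      case False
      then have "y - l x \<in> {0..<sum_list (map l xs)}" using y by auto
      moreover have "{0..<sum_list (map l xs)} \<subseteq> (\<Union>i\<in>set xs. {start_in xs l i..<start_in xs l i + l i})"
        using Cons.IH Cons.prems by auto
      ultimately obtain i where i: "i \<in> set xs" "y - l x \<in> {start_in xs l i..<start_in xs l i + l i}"
        by blast
      have "i \<noteq> x" using i Cons.prems by auto
      then show ?thesis using i by (auto simp: start_in_Cons intro!: bexI[of _ i])
    qed
  qed
qed

lemma contained:
  "k \<in> set t \<Longrightarrow> \<forall>i\<in>set t. 0 \<le> l i \<Longrightarrow>
   0 \<le> start_in t l k \<and> start_in t l k + l k \<le> sum_list (map l t)"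
proof (induction t)
  case Nil then show ?case by simp
next
  case (Cons x xs)
  have nn: "0 \<le> sum_list (map l xs)" using Cons.prems by (intro sum_list_nonneg) auto
  show ?case
  proof (cases "x = k")
    case True then show ?thesis using nn Cons.prems by (auto simp: start_in_Cons)
  next
    case False
    then show ?thesis using Cons by (auto simp: start_in_Cons)
  qed
qed



definition th :: "real \<Rightarrow> real" where "th P = 1 - 2/P - (1+2*P)/P^3"

definition Inv :: "nat \<Rightarrow> nat \<Rightarrow> real \<Rightarrow> real \<Rightarrow> (nat \<Rightarrow> real) \<Rightarrow> bool" where
  "Inv n k P C v = ((\<forall>i\<in>{1..n}. 0 \<le> v i) \<and> 0 < vnorm1 n v \<and> th P * vnorm1 n v \<le> v k
      \<and> (\<Sum>i\<in>{2..n-1}-{k}. v i) \<le> vnorm1 n v / (P * C))"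

lemma th_gt: assumes "5 \<le> P" shows "1/2 < th P"
proof -
  have p0: "0 < P" using assms by simp
  have a: "P^2 \<ge> 5*P" using assms by (simp add: power2_eq_square mult_right_mono)
  have b: "P^3 \<ge> 5*P^2" using assms by (simp add: power3_eq_cube power2_eq_square mult_right_mono mult.assoc)
  have "2 + 4*P + 4*P^2 < P^3" using a b assms by linarith
  then have h: "P*(2 + 4*P + 4*P^2) < P*P^3" using p0 by (rule mult_strict_left_mono)
  show ?thesis unfolding th_def using p0 h
    by (simp add: field_simps power3_eq_cube power2_eq_square)
qed

lemma th_le1: assumes "5 \<le> P" shows "th P \<le> 1"
proof -
  have "0 \<le> (1+2*P)/P^3" "0 \<le> 2/P" using assms by auto
  then show ?thesis unfolding th_def by linarith
qed

lemma Theta_nonneg: "0 \<le> Theta n a c i j"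
  by (simp add: Theta_def)

lemma step_Inv:
  fixes n k a c :: nat and P C0 :: real and v :: "nat \<Rightarrow> real"
  assumes n: "4 \<le> n" and P: "real n + 1 \<le> P" and k: "odd k" "3 \<le> k" "k \<le> n-1"
    and C0: "1 \<le> C0" and cC: "real c = P^2 * C0" and aC: "real a = P * real c"
    and I: "Inv n k P (real c) v"
  shows "Inv n k P C0 (mat_vec n (Theta n a c) v)"
proof -
  define N where "N = vnorm1 n v"
  define x where "x = mat_vec n (Theta n a c) v"
  define Oth where "Oth = {2..n-1}-{k}"
  define D where "D = (\<Sum>i\<in>Oth. v i)"
  define \<theta> where "\<theta> = th P"
  have P5: "5 \<le> P" using n P by linarith
  have Pp: "0 < P" using P5 by simp
  have cP2: "P^2 \<le> real c" using cC C0 by (simp add: mult_le_cancel_left1 mult_left_mono[of 1 C0 "P^2", simplified])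
  have c1: "1 \<le> real c" using cP2 P5 by (smt (verit) one_le_power)
  have Iu: "(\<forall>i\<in>{1..n}. 0 \<le> v i) \<and> 0 < N \<and> \<theta> * N \<le> v k \<and> D \<le> N / (P * real c)"
    using I unfolding Inv_def N_def D_def Oth_def \<theta>_def .
  then have vnn: "\<forall>i\<in>{1..n}. 0 \<le> v i" and Np: "0 < N" and vk: "\<theta> * N \<le> v k" and DN: "D \<le> N / (P * real c)"
    by blast+
  have th12: "1/2 < \<theta>" and th1: "\<theta> \<le> 1" using th_gt[OF P5] th_le1[OF P5] by (auto simp: \<theta>_def)
  have xdef: "\<And>i. x i = (\<Sum>j\<in>{1..n}. Theta n a c i j * v j)" by (simp add: x_def mat_vec_def)
  have Nsum: "N = (\<Sum>j\<in>{1..n}. v j)" by (simp add: N_def vnorm1_def)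
  have xnn: "\<forall>i\<in>{1..n}. 0 \<le> x i"
    unfolding xdef using vnn by (auto intro!: sum_nonneg mult_nonneg_nonneg Theta_nonneg)
  have kin: "k \<in> {1..n}" "k \<noteq> 1" "k \<noteq> n" using k n by auto
  have Tkk: "Theta n a c k k = real a + 1" using kin k by (simp add: Theta_def)
  have xk: "(real a + 1) * v k \<le> x k"
  proof -
    have "Theta n a c k k * v k \<le> (\<Sum>j\<in>{1..n}. Theta n a c k j * v j)"
      by (rule member_le_sum) (use kin vnn in \<open>auto intro!: mult_nonneg_nonneg Theta_nonneg\<close>)
    then show ?thesis using Tkk xdef by simp
  qed
  have x1n: "x 1 + x n \<le> (2 * real c + 1) * N"
  proof -
    have "x 1 + x n = (\<Sum>j\<in>{1..n}. (Theta n a c 1 j + Theta n a c n j) * v j)"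
      by (simp add: xdef sum.distrib[symmetric] distrib_right)
    also have "\<dots> \<le> (\<Sum>j\<in>{1..n}. (2 * real c + 1) * v j)"
    proof (rule sum_mono)
      fix j assume j: "j \<in> {1..n}"
      have "Theta n a c 1 j + Theta n a c n j \<le> 2 * real c + 1"
        using j n c1 by (auto simp: Theta_def)
      then show "(Theta n a c 1 j + Theta n a c n j) * v j \<le> (2 * real c + 1) * v j"
        using vnn j by (simp add: mult_right_mono)
    qed
    also have "\<dots> = (2 * real c + 1) * N" by (simp add: Nsum sum_distrib_left)
    finally show ?thesis .
  qed
  have xO: "x i \<le> 2 * N + (if odd i then (real a + 1) * (v (i-1) + v i) else 0)" if i: "i \<in> Oth" for i
  proof (cases "odd i")
    case False
    have "x i \<le> (\<Sum>j\<in>{1..n}. 2 * v j)"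
      unfolding xdef
    proof (rule sum_mono)
      fix j assume j: "j \<in> {1..n}"
      have "Theta n a c i j \<le> 2" using i j False n by (auto simp: Theta_def Oth_def)
      then show "Theta n a c i j * v j \<le> 2 * v j" using vnn j by (simp add: mult_right_mono)
    qed
    then show ?thesis using False by (simp add: Nsum sum_distrib_left)
  next
    case True
    have i3: "3 \<le> i" "i \<le> n - 1" using i True by (auto simp: Oth_def elim: oddE)
    have "x i \<le> (\<Sum>j\<in>{1..n}. (real a + 1) * (if j = i - 1 then v j else 0) + (real a + 1) * (if j = i then v j else 0))"
      unfolding xdef
    proof (rule sum_mono)
      fix j assume j: "j \<in> {1..n}"
      show "Theta n a c i j * v j \<le> (real a + 1) * (if j = i - 1 then v j else 0) + (real a + 1) * (if j = i then v j else 0)"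
        using i3 True j vnn n by (auto simp: Theta_def mult_right_mono)
    qed
    also have "\<dots> = (real a + 1) * (\<Sum>j\<in>{1..n}. if j = i - 1 then v j else 0) + (real a + 1) * (\<Sum>j\<in>{1..n}. if j = i then v j else 0)"
      by (simp only: sum.distrib sum_distrib_left)
    also have "\<dots> = (real a + 1) * (v (i-1) + v i)"
    proof -
      have m: "i - 1 \<in> {1..n}" "i \<in> {1..n}" using i3 n by auto
      show ?thesis by (simp only: sum.delta[OF finite_atLeastAtMost] m if_True distrib_left)
    qed
    finally show ?thesis using True Np by simp
  qed
  have finO: "finite Oth" by (simp add: Oth_def)
  have cardO: "real (card Oth) \<le> real n - 2"
  proof -
    have "card Oth \<le> card {2..n-1}" unfolding Oth_def by (rule card_mono) auto
    then show ?thesis using n by simp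
  qed
  define Od where "Od = {i\<in>Oth. odd i}"
  have OdO: "Od \<subseteq> Oth" by (auto simp: Od_def)
  have imgO: "(\<lambda>i. i - 1) ` Od \<subseteq> Oth"
  proof
    fix y assume "y \<in> (\<lambda>i. i - 1) ` Od"
    then obtain i where i: "i \<in> Od" "y = i - 1" by blast
    then have "3 \<le> i" "i \<le> n - 1" "odd i" by (auto simp: Od_def Oth_def elim: oddE)
    then show "y \<in> Oth" using i k by (auto simp: Oth_def)
  qed
  have vO: "\<forall>i\<in>Oth. 0 \<le> v i" using vnn by (auto simp: Oth_def)
  have s1: "(\<Sum>i\<in>Od. v (i - 1)) \<le> D"
  proof -
    have inj: "inj_on (\<lambda>i. i - 1) Od" by (auto simp: inj_on_def Od_def Oth_def)
    have "(\<Sum>i\<in>Od. v (i - 1)) = (\<Sum>i\<in>(\<lambda>i. i - 1) ` Od. v i)"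
      using sum.reindex[OF inj, of v] by simp
    also have "\<dots> \<le> D" unfolding D_def by (rule sum_mono2[OF finO imgO]) (use vO in auto)
    finally show ?thesis .
  qed
  have s2: "(\<Sum>i\<in>Od. v i) \<le> D"
    unfolding D_def by (rule sum_mono2[OF finO OdO]) (use vO in auto)
  have Ox: "(\<Sum>i\<in>Oth. x i) \<le> 2 * N * (real n - 2) + (real a + 1) * (2 * D)"
  proof -
    have "(\<Sum>i\<in>Oth. x i) \<le> (\<Sum>i\<in>Oth. 2 * N + (if odd i then (real a + 1) * (v (i-1) + v i) else 0))"
      by (rule sum_mono) (use xO in auto)
    also have "\<dots> = (\<Sum>i\<in>Oth. 2 * N) + (\<Sum>i\<in>Oth. if odd i then (real a + 1) * (v (i-1) + v i) else 0)"
      by (rule sum.distrib)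
    also have "(\<Sum>i\<in>Oth. if odd i then (real a + 1) * (v (i-1) + v i) else 0) = (\<Sum>i\<in>Od. (real a + 1) * (v (i-1) + v i))"
      unfolding Od_def by (rule sum.inter_filter[OF finO, symmetric])
    also have "(\<Sum>i\<in>Od. (real a + 1) * (v (i-1) + v i)) = (real a + 1) * ((\<Sum>i\<in>Od. v (i - 1)) + (\<Sum>i\<in>Od. v i))"
      by (simp only: sum_distrib_left[symmetric] sum.distrib)
    also have "(\<Sum>i\<in>Oth. 2 * N) = 2 * N * real (card Oth)" by simp
    also have "2 * N * real (card Oth) + (real a + 1) * ((\<Sum>i\<in>Od. v (i - 1)) + (\<Sum>i\<in>Od. v i)) \<le> 2 * N * (real n - 2) + (real a + 1) * (2 * D)"
    proof -
      have "2 * N * real (card Oth) \<le> 2 * N * (real n - 2)" using cardO Np by simp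
      moreover have "(real a + 1) * ((\<Sum>i\<in>Od. v (i - 1)) + (\<Sum>i\<in>Od. v i)) \<le> (real a + 1) * (2 * D)"
        by (rule mult_left_mono) (use s1 s2 in linarith, simp)
      ultimately show ?thesis by linarith
    qed
    finally show ?thesis .
  qed
  have Dp: "0 \<le> D" unfolding D_def using vO by (simp add: sum_nonneg)
  have aD: "(real a + 1) * D \<le> 2 * N"
  proof -
    have "(real a + 1) * D \<le> (real a + 1) * (N / (P * real c))" using mult_left_mono[OF DN, of "real a + 1"] by simp
    also have "\<dots> = N + N / (P * real c)" using aC Pp c1 by (simp add: field_simps)
    also have "\<dots> \<le> 2 * N"
    proof -
      have "1 \<le> P * real c" using mult_mono[of 1 P 1 "real c"] P5 c1 by simp
      then have "N / (P * real c) \<le> N" using Np by (simp add: divide_le_eq mult_le_cancel_left1)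
      then show ?thesis by simp
    qed
    finally show ?thesis .
  qed
  have OxB: "(\<Sum>i\<in>Oth. x i) \<le> 2 * P * N"
  proof -
    have "2 * N * (real n - 2) + (real a + 1) * (2 * D) \<le> 2 * N * (P - 3) + 4 * N"
    proof -
      have "2*N*(real n - 2) \<le> 2*N*(P-3)" using P Np by (intro mult_left_mono) auto
      moreover have "(real a+1)*(2*D) = 2*((real a+1)*D)" by simp
      ultimately show ?thesis using aD by linarith
    qed
    moreover have "2*N*(P-3) + 4*N = 2*P*N - 2*N" by (simp add: algebra_simps)
    ultimately show ?thesis using Ox Np by linarith
  qed
  have dec: "{1..n} = insert 1 (insert n (insert k Oth))" using kin n by (auto simp: Oth_def)
  have N': "vnorm1 n x = x 1 + x n + x k + (\<Sum>i\<in>Oth. x i)"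
  proof -
    have nin: "k \<notin> Oth" "n \<notin> Oth" "1 \<notin> Oth" using n by (auto simp: Oth_def)
    have "vnorm1 n x = (\<Sum>i\<in>insert 1 (insert n (insert k Oth)). x i)" unfolding vnorm1_def dec ..
    also have "\<dots> = x 1 + (x n + (x k + (\<Sum>i\<in>Oth. x i)))"
      using kin n finO nin by (subst sum.insert; auto)+
    finally show ?thesis by simp
  qed
  have thp: "0 < \<theta>" using th12 by simp
  have xkp: "(real a + 1) * (\<theta> * N) \<le> x k"
  proof -
    have "(real a + 1) * (\<theta> * N) \<le> (real a + 1) * v k" using vk by (intro mult_left_mono) auto
    then show ?thesis using xk by linarith
  qed
  have tN: "0 < \<theta> * N" using thp Np by simp
  have nn3: "0 \<le> x 1" "0 \<le> x n" "0 \<le> (\<Sum>i\<in>Oth. x i)" using xnn n finO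
    by (auto simp: Oth_def intro!: sum_nonneg)
  have Nxp: "0 < vnorm1 n x"
  proof -
    have "0 < (real a + 1) * (\<theta> * N)" using tN by simp
    then show ?thesis using N' xkp nn3 by linarith
  qed
  have K: "2 * real c + 1 + 2 * P \<le> (1 - \<theta>) * (real a + 1)"
  proof -
    have e: "1 - \<theta> = 2/P + (1+2*P)/P^3" by (simp add: \<theta>_def th_def)
    have e1: "(1 - \<theta>) * (real a + 1) = 2 * real c + 2/P + (1+2*P) * (real c / P^2) + (1+2*P)/P^3"
      unfolding e aC using Pp by (simp add: field_simps power2_eq_square power3_eq_cube)
    have "1 \<le> real c / P^2" using cP2 Pp by simp
    then have "(1+2*P) * 1 \<le> (1+2*P) * (real c / P^2)" using Pp by (intro mult_left_mono) auto
    then have "(1+2*P) \<le> (1+2*P) * (real c / P^2)" by simp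
    moreover have "0 \<le> 2/P" "0 \<le> (1+2*P)/P^3" using Pp by auto
    ultimately show ?thesis unfolding e1 by linarith
  qed
  have claim1: "\<theta> * vnorm1 n x \<le> x k"
  proof -
    have R: "x 1 + x n + (\<Sum>i\<in>Oth. x i) \<le> (2 * real c + 1 + 2 * P) * N"
      using x1n OxB by (simp add: distrib_right)
    also have "\<dots> \<le> ((1 - \<theta>) * (real a + 1)) * N" using K Np by (intro mult_right_mono) auto
    finally have R2: "x 1 + x n + (\<Sum>i\<in>Oth. x i) \<le> ((1 - \<theta>) * (real a + 1)) * N" .
    have "\<theta> * (x 1 + x n + (\<Sum>i\<in>Oth. x i)) \<le> \<theta> * (((1 - \<theta>) * (real a + 1)) * N)"
      using R2 thp by (intro mult_left_mono) auto
    also have "\<dots> = (1 - \<theta>) * ((real a + 1) * (\<theta> * N))" by (simp add: algebra_simps)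
    also have "\<dots> \<le> (1 - \<theta>) * x k" using xkp th1 by (intro mult_left_mono) auto
    finally have "\<theta> * (x 1 + x n + (\<Sum>i\<in>Oth. x i)) \<le> (1 - \<theta>) * x k" .
    then show ?thesis unfolding N' by (simp add: algebra_simps)
  qed
  have claim2: "(\<Sum>i\<in>Oth. x i) \<le> vnorm1 n x / (P * C0)"
  proof -
    have pc0: "0 < P * C0" using Pp C0 by simp
    have "(\<Sum>i\<in>Oth. x i) * (P * C0) \<le> 2 * P * N * (P * C0)" using OxB pc0 by (intro mult_right_mono) auto
    also have "\<dots> = 2 * (real c * N)" using cC by (simp add: power2_eq_square algebra_simps)
    also have "\<dots> \<le> (P * \<theta>) * (real c * N)"
    proof -
      have "5 * (1/2) \<le> P * \<theta>" using P5 th12 by (intro mult_mono) auto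
      then show ?thesis using Np c1 by (intro mult_right_mono) auto
    qed
    also have "\<dots> \<le> (real a + 1) * (\<theta> * N)"
    proof -
      have "(real a + 1) * (\<theta> * N) = (P * \<theta>) * (real c * N) + \<theta> * N" using aC by (simp add: algebra_simps)
      then show ?thesis using tN by linarith
    qed
    also have "\<dots> \<le> vnorm1 n x" using N' xkp nn3 by linarith
    finally show ?thesis using pc0 by (simp add: pos_le_divide_eq)
  qed
  have "Inv n k P C0 x" unfolding Inv_def Oth_def[symmetric] \<theta>_def[symmetric]
    using xnn Nxp claim1 claim2 by blast
  then show ?thesis by (simp add: x_def)
qed



lemma unit_Inv:
  assumes "k \<in> {1..n}" "0 < P" "0 < C" "th P \<le> 1"
  shows "Inv n k P C (unit_vec k)"
proof -
  have N: "vnorm1 n (unit_vec k) = 1" using assms(1)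
    by (simp add: vnorm1_def unit_vec_def)
  have "(\<Sum>i\<in>{2..n-1}-{k}. unit_vec k i) = 0" by (simp add: unit_vec_def)
  then show ?thesis using N assms by (simp add: Inv_def unit_vec_def)
qed

lemma c_pos: assumes "c 1 > (0::nat)" "\<forall>i\<ge>1. c (Suc i) = p\<^sup>2 * c i" "p \<ge> 1"
  shows "i \<ge> 1 \<Longrightarrow> c i \<ge> 1"
proof (induction i rule: dec_induct)
  case base then show ?case using assms by simp
next
  case (step i)
  then show ?case using assms by simp
qed

lemma prod_Inv:
  fixes n p k :: nat and a c :: "nat \<Rightarrow> nat"
  assumes n: "4 \<le> n" and p: "p \<ge> n + 1" and k: "odd k" "3 \<le> k" "k \<le> n-1"
    and c1: "c 1 > 0"
    and ac: "\<forall>i\<ge>1. a i = p * c i" "\<forall>i\<ge>1. c (Suc i) = p\<^sup>2 * c i"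
  shows "j' \<ge> 1 \<Longrightarrow> Inv n k (real p) (real (c j')) (mat_prod_apply n (\<lambda>q. Theta n (a q) (c q)) j' (j' + d) (unit_vec k))"
proof (induction d arbitrary: j')
  case 0
  have "mat_prod_apply n (\<lambda>q. Theta n (a q) (c q)) j' (j' + 0) (unit_vec k) = unit_vec k"
    by (simp add: mat_prod_apply_def)
  moreover have "c j' \<ge> 1" using c_pos[OF c1 ac(2)] p 0 by simp
  moreover have "th (real p) \<le> 1" using th_le1 p n by simp
  ultimately show ?case using unit_Inv[of k n "real p" "real (c j')"] k n p by simp
next
  case (Suc d)
  have IH: "Inv n k (real p) (real (c (Suc j'))) (mat_prod_apply n (\<lambda>q. Theta n (a q) (c q)) (Suc j') (Suc j' + d) (unit_vec k))"
    using Suc.IH[of "Suc j'"] by simp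
  have e: "mat_prod_apply n (\<lambda>q. Theta n (a q) (c q)) j' (j' + Suc d) (unit_vec k)
     = mat_vec n (Theta n (a (Suc j')) (c (Suc j'))) (mat_prod_apply n (\<lambda>q. Theta n (a q) (c q)) (Suc j') (Suc j' + d) (unit_vec k))"
  proof -
    have jj: "j' + Suc d = Suc j' + d" by simp
    have u: "[Suc j'..<Suc (Suc j' + d)] = Suc j' # [Suc (Suc j')..<Suc (Suc j' + d)]"
      by (rule upt_conv_Cons) simp
    show ?thesis unfolding mat_prod_apply_def jj u by (simp only: foldr.simps comp_apply)
  qed
  have cj: "1 \<le> real (c j')" using c_pos[OF c1 ac(2)] p Suc.prems by simp
  show ?case unfolding e
    apply (rule step_Inv[OF n _ k cj _ _ IH])
    using p apply simp
    using ac Suc.prems apply simp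
    using ac Suc.prems apply simp
    done
qed

lemma all_Inv:
  fixes n p k :: nat and a c :: "nat \<Rightarrow> nat"
  assumes n: "4 \<le> n" and p: "p \<ge> n + 1" and k: "odd k" "3 \<le> k" "k \<le> n-1"
    and c1: "c 1 > 0"
    and ac: "\<forall>i\<ge>1. a i = p * c i" "\<forall>i\<ge>1. c (Suc i) = p\<^sup>2 * c i"
    and j: "j \<ge> 1"
  shows "Inv n k (real p) (real (c j)) (mat_prod_apply n (\<lambda>q. Theta n (a q) (c q)) j m (unit_vec k))"
proof (cases "m \<le> j")
  case True
  have "mat_prod_apply n (\<lambda>q. Theta n (a q) (c q)) j m (unit_vec k) = unit_vec k"
    using True by (simp add: mat_prod_apply_def)
  moreover have "c j \<ge> 1" using c_pos[OF c1 ac(2)] p j by simp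
  moreover have "th (real p) \<le> 1" using th_le1 p n by simp
  ultimately show ?thesis using unit_Inv[of k n "real p" "real (c j)"] k n p by simp
next
  case False
  have e: "j + (m - j) = m" using False by simp
  show ?thesis using prod_Inv[OF n p k c1 ac j, of "m - j"] unfolding e .
qed

lemma limit_facts:
  fixes V :: "nat \<Rightarrow> nat \<Rightarrow> real"
  assumes I: "\<And>m. Inv n k P C (V m)" and kn: "k \<in> {1..n}"
    and lim: "\<forall>i\<in>{1..n}. (\<lambda>m. vnormalize n (V m) i) \<longlonglongrightarrow> w i"
  shows "th P \<le> w k" "(\<Sum>i\<in>{1..n}. w i) = 1" "(\<Sum>i\<in>{2..n-1}-{k}. w i) \<le> 1 / (P * C)"
proof -
  have Np: "0 < vnorm1 n (V m)" for m using I[of m] unfolding Inv_def by blast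
  have s1: "(\<Sum>i\<in>{1..n}. vnormalize n (V m) i) = 1" for m
  proof -
    have "vnorm1 n (V m) \<noteq> 0" using Np[of m] by simp
    then show ?thesis by (simp add: vnormalize_def sum_divide_distrib[symmetric] vnorm1_def)
  qed
  have lim': "(\<lambda>m. vnormalize n (V m) i) \<longlonglongrightarrow> w i" if "i \<in> {1..n}" for i
    using lim that by blast
  have l1: "(\<lambda>m. \<Sum>i\<in>{1..n}. vnormalize n (V m) i) \<longlonglongrightarrow> (\<Sum>i\<in>{1..n}. w i)"
    by (rule tendsto_sum) (rule lim')
  have l1': "(\<lambda>m. \<Sum>i\<in>{1..n}. vnormalize n (V m) i) \<longlonglongrightarrow> 1"
    unfolding s1 by (rule tendsto_const)
  show "(\<Sum>i\<in>{1..n}. w i) = 1" using LIMSEQ_unique[OF l1 l1'] .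
  have b1: "th P \<le> vnormalize n (V m) k" for m
  proof -
    have "th P * vnorm1 n (V m) \<le> V m k" using I[of m] unfolding Inv_def by blast
    then show ?thesis using Np[of m] by (simp add: vnormalize_def pos_le_divide_eq)
  qed
  show "th P \<le> w k"
    by (rule LIMSEQ_le_const[OF lim'[OF kn]]) (use b1 in blast)
  have l2: "(\<lambda>m. \<Sum>i\<in>{2..n-1}-{k}. vnormalize n (V m) i) \<longlonglongrightarrow> (\<Sum>i\<in>{2..n-1}-{k}. w i)"
    by (rule tendsto_sum) (rule lim', auto)
  have b2: "(\<Sum>i\<in>{2..n-1}-{k}. vnormalize n (V m) i) \<le> 1 / (P * C)" for m
  proof -
    have "(\<Sum>i\<in>{2..n-1}-{k}. vnormalize n (V m) i) = (\<Sum>i\<in>{2..n-1}-{k}. V m i) / vnorm1 n (V m)"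
      unfolding vnormalize_def by (rule sum_divide_distrib[symmetric])
    also have "\<dots> \<le> (vnorm1 n (V m) / (P * C)) / vnorm1 n (V m)"
    proof (rule divide_right_mono)
      show "(\<Sum>i\<in>{2..n-1}-{k}. V m i) \<le> vnorm1 n (V m) / (P * C)" using I[of m] unfolding Inv_def by blast
    qed (use Np[of m] in simp)
    also have "\<dots> = 1 / (P * C)" using Np[of m] by simp
    finally show ?thesis .
  qed
  show "(\<Sum>i\<in>{2..n-1}-{k}. w i) \<le> 1 / (P * C)"
    by (rule LIMSEQ_le_const2[OF l2]) (use b2 in blast)
qed



theorem mainTheorem4:
  fixes n p k j :: nat and a c :: "nat \<Rightarrow> nat" and l0 :: "nat \<Rightarrow> real"
    and \<mu> :: "real measure"
  assumes n: "n \<ge> 4" "even n"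
    and p: "p \<ge> n + 1"
    and c1: "c 1 > 0"
    and ac: "\<forall>i\<ge>1. a i = p * c i" "\<forall>i\<ge>1. c (Suc i) = p\<^sup>2 * c i"
    and len: "\<forall>i\<in>{1..n}. l0 i > 0" "(\<Sum>i\<in>{1..n}. l0 i) = 1"
    and path: "follows_path (pi_top n, pi_bot n, l0) (\<lambda>i. gamma_word n (a i) (c i))"
    and meas: "prob_space \<mu>" "sets \<mu> = sets borel" "emeasure \<mu> {0..<1} = 1"
    and inv: "\<forall>A\<in>sets borel. emeasure \<mu> (iet_map (pi_top n, pi_bot n, l0) -` A) = emeasure \<mu> A"
    and lam: "\<forall>j'. \<exists>w t. t > 0 \<and>
         (\<forall>i\<in>{1..n}. (\<lambda>m. vnormalize n (mat_prod_apply n (\<lambda>q. Theta n (a q) (c q)) j' m (unit_vec k)) i)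
                        \<longlonglongrightarrow> w i) \<and>
         (\<forall>i\<in>{1..n}. measure \<mu> (sub_interval
              (block_state (pi_top n, pi_bot n, l0) (\<lambda>q. gamma_word n (a q) (c q)) j') i) = t * w i)"
    and k: "odd k" "3 \<le> k" "k \<le> n - 1"
    and j: "j \<ge> 1"
  shows "measure \<mu> (sub_interval (block_state (pi_top n, pi_bot n, l0) (\<lambda>q. gamma_word n (a q) (c q)) j) k)
           / measure \<mu> (whole_interval (block_state (pi_top n, pi_bot n, l0) (\<lambda>q. gamma_word n (a q) (c q)) j))
           > 1 / 2
       \<and> measure \<mu> (\<Union>i\<in>{2..n-1} - {k}. sub_interval (block_state (pi_top n, pi_bot n, l0) (\<lambda>q. gamma_word n (a q) (c q)) j) i)
           / measure \<mu> (whole_interval (block_state (pi_top n, pi_bot n, l0) (\<lambda>q. gamma_word n (a q) (c q)) j))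
           < real n / (2 * real (c j))"
proof -
  define G where "G = (\<lambda>q. gamma_word n (a q) (c q))"
  define s0 where "s0 = (pi_top n, pi_bot n, l0)"
  define S where "S = block_state s0 G j"
  have n1: "1 \<le> n" using n by simp
  have gS: "good n S" unfolding S_def
    by (rule block_good[OF n1]) (use path init_good[OF n(2) n(1) len(1)] in \<open>auto simp: G_def s0_def\<close>)
  obtain tl bl l where S_eq: "S = (tl, bl, l)" by (cases S) auto
  have gd: "distinct tl" "set tl = {1..n}" "\<forall>i\<in>{1..n}. l i > 0"
    using gS by (auto simp: good_def S_eq)
  obtain w t0 where t0: "t0 > 0"
    and lim: "\<forall>i\<in>{1..n}. (\<lambda>m. vnormalize n (mat_prod_apply n (\<lambda>q. Theta n (a q) (c q)) j m (unit_vec k)) i) \<longlonglongrightarrow> w i"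
    and mu: "\<forall>i\<in>{1..n}. measure \<mu> (sub_interval S i) = t0 * w i"
    using lam[THEN spec, of j] unfolding S_def G_def s0_def by blast
  have kin: "k \<in> {1..n}" using k n by auto
  have P5: "5 \<le> real p" using n p by simp
  have cj: "1 \<le> real (c j)" using c_pos[OF c1 ac(2)] p j by simp
  have lf: "th (real p) \<le> w k" "(\<Sum>i\<in>{1..n}. w i) = 1" "(\<Sum>i\<in>{2..n-1}-{k}. w i) \<le> 1 / (real p * real (c j))"
    using limit_facts[OF all_Inv[OF n(1) p k c1 ac j] kin lim] by auto
  have th12: "1/2 < th (real p)" using th_gt[OF P5] .
  interpret prob_space \<mu> by (rule meas(1))
  have subI: "sub_interval S i = {start_in tl l i..<start_in tl l i + l i}" for i
    by (simp add: sub_interval_def S_eq)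
  have wholeI: "whole_interval S = {0..<sum_list (map l tl)}"
    by (simp add: whole_interval_def S_eq)
  have msets: "{x..<y} \<in> sets \<mu>" for x y :: real using meas(2) by simp
  have lnn: "\<forall>i\<in>set tl. 0 \<le> l i" using gd by auto
  have cov: "whole_interval S \<subseteq> (\<Union>i\<in>{1..n}. sub_interval S i)"
    unfolding wholeI subI using cover[OF gd(1) lnn] gd(2) by simp
  have fin1: "finite {1..n::nat}" by simp
  have Mle: "measure \<mu> (whole_interval S) \<le> t0"
  proof -
    have "measure \<mu> (whole_interval S) \<le> measure \<mu> (\<Union>i\<in>{1..n}. sub_interval S i)"
      by (rule finite_measure_mono[OF cov]) (auto simp: subI msets)
    also have "\<dots> \<le> (\<Sum>i\<in>{1..n}. measure \<mu> (sub_interval S i))"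
      by (rule measure_UNION_le) (auto simp: subI msets)
    also have "\<dots> = (\<Sum>i\<in>{1..n}. t0 * w i)" using mu by simp
    also have "\<dots> = t0" using lf(2) by (simp add: sum_distrib_left[symmetric])
    finally show ?thesis .
  qed
  have kcont: "sub_interval S k \<subseteq> whole_interval S"
    using contained[of k tl l] kin gd(2) lnn unfolding subI wholeI by auto
  have Mge: "t0 * w k \<le> measure \<mu> (whole_interval S)"
    using finite_measure_mono[OF kcont] mu kin by (simp add: wholeI msets)
  have twk: "t0 / 2 < t0 * w k"
  proof -
    have "t0 * (1/2) < t0 * w k" using th12 lf(1) t0 by (intro mult_strict_left_mono) auto
    then show ?thesis by simp
  qed
  have Mpos: "0 < measure \<mu> (whole_interval S)" using Mge twk t0 by linarith
  have Ule: "measure \<mu> (\<Union>i\<in>{2..n-1} - {k}. sub_interval S i) \<le> t0 / (real p * real (c j))"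
  proof -
    have "measure \<mu> (\<Union>i\<in>{2..n-1} - {k}. sub_interval S i) \<le> (\<Sum>i\<in>{2..n-1} - {k}. measure \<mu> (sub_interval S i))"
      by (rule measure_UNION_le) (auto simp: subI msets)
    also have "\<dots> = (\<Sum>i\<in>{2..n-1} - {k}. t0 * w i)" using mu by (intro sum.cong) auto
    also have "\<dots> = t0 * (\<Sum>i\<in>{2..n-1} - {k}. w i)" by (simp add: sum_distrib_left)
    also have "\<dots> \<le> t0 * (1 / (real p * real (c j)))" using lf(3) t0 by (intro mult_left_mono) auto
    finally show ?thesis by simp
  qed
  have claim1: "measure \<mu> (sub_interval S k) / measure \<mu> (whole_interval S) > 1/2"
  proof -
    have "1/2 * measure \<mu> (whole_interval S) < measure \<mu> (sub_interval S k)"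
      using Mle twk mu kin by simp
    then show ?thesis using Mpos by (simp add: pos_less_divide_eq)
  qed
  have claim2: "measure \<mu> (\<Union>i\<in>{2..n-1} - {k}. sub_interval S i) / measure \<mu> (whole_interval S)
      < real n / (2 * real (c j))"
  proof -
    have q: "0 < t0 / real (c j)" using t0 cj by simp
    have "1 / real p < real n * th (real p) / 2"
    proof -
      have "1 / real p \<le> 1/5" using P5 by (simp add: divide_le_eq)
      moreover have "4 * (1/2) < real n * th (real p)" using n th12 by (intro mult_le_less_imp_less) auto
      ultimately show ?thesis by linarith
    qed
    then have "t0 / real (c j) * (1 / real p) < t0 / real (c j) * (real n * th (real p) / 2)"
      using q by (rule mult_strict_left_mono)
    moreover have "t0 / real (c j) * (1 / real p) = t0 / (real p * real (c j))" by simp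
    moreover have "t0 / real (c j) * (real n * th (real p) / 2) = real n / (2 * real (c j)) * (t0 * th (real p))"
      by (simp add: field_simps)
    moreover have "real n / (2 * real (c j)) * (t0 * th (real p)) \<le> real n / (2 * real (c j)) * measure \<mu> (whole_interval S)"
    proof (rule mult_left_mono)
      show "t0 * th (real p) \<le> measure \<mu> (whole_interval S)"
        using Mge lf(1) t0 by (smt (verit) mult_left_mono)
    qed (use cj in simp)
    ultimately have "measure \<mu> (\<Union>i\<in>{2..n-1} - {k}. sub_interval S i) < real n / (2 * real (c j)) * measure \<mu> (whole_interval S)"
      using Ule by linarith
    then show ?thesis using Mpos by (simp add: pos_divide_less_eq)
  qed
  show ?thesis using claim1 claim2 unfolding S_def G_def s0_def by blast
qed

end
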